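(* Let $n\ge 1$, $r\ge 1$ be integers and let $v$ be a vertex of $G(n,r)$, with $d(v)$ its degree in $G(n,r)$. (a) If every positive entry of $v$ equals $r$ (i.e. $v=rP$ for a permutation matrix $P$), then $d(v)=\delta(G(n,r))=\binom{n}{2}$, where $\delta$ denotes the minimum degree. (b) If not every positive entry of $v$ equals $r$, then $d(v)\ge \frac{(n+2)(n-1)}{2}=\binom{n}{2}+n-1$.
   Context: For integers $n,r\ge 1$, $G(n,r)$ is the simple undirected graph whose vertices are the $n\times n$ matrices with non-negative integer entries all of whose row sums and column sums equal $r$. Let $e_{ij}$ be the $n\times n$ matrix with a $1$ in position $(i,j)$ and $0$ elsewhere, and let $\mathcal{B}=\{\pm(e_{ij}+e_{kl}-e_{il}-e_{kj}) : 1\le i<k\le n,\ 1\le j<l\le n\}$ (the Markov moves). Two vertices $u,v$ are adjacent iff $u-v\in\mathcal{B}$. Thus the degree $d(v)$ equals the number of moves $b\in\mathcal{B}$ with $v+b$ having all entries non-negative. *)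

theory Defs
  imports Main
begin

(* n x n matrices with entries in nat are represented as functions nat => nat => nat,
   indices 0..n-1, required to vanish outside {0..<n} x {0..<n}. *)

definition verts :: "nat \<Rightarrow> nat \<Rightarrow> (nat \<Rightarrow> nat \<Rightarrow> nat) set" where
  "verts n r = {v. (\<forall>i j. (i \<ge> n \<or> j \<ge> n) \<longrightarrow> v i j = 0)
                  \<and> (\<forall>i<n. (\<Sum>j<n. v i j) = r)
                  \<and> (\<forall>j<n. (\<Sum>i<n. v i j) = r)}"

definition emat :: "nat \<Rightarrow> nat \<Rightarrow> nat \<Rightarrow> nat \<Rightarrow> int" where
  "emat i j = (\<lambda>a c. if a = i \<and> c = j then 1 else 0)"

definition basic_move :: "nat \<Rightarrow> nat \<Rightarrow> nat \<Rightarrow> nat \<Rightarrow> nat \<Rightarrow> nat \<Rightarrow> int" where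
  "basic_move i j k l = (\<lambda>a c. emat i j a c + emat k l a c - emat i l a c - emat k j a c)"

definition moves :: "nat \<Rightarrow> (nat \<Rightarrow> nat \<Rightarrow> int) set" where
  "moves n = {b. \<exists>i k j l. i < k \<and> k < n \<and> j < l \<and> l < n \<and>
                 (b = basic_move i j k l \<or> b = (\<lambda>a c. - basic_move i j k l a c))}"

definition mdiff :: "(nat \<Rightarrow> nat \<Rightarrow> nat) \<Rightarrow> (nat \<Rightarrow> nat \<Rightarrow> nat) \<Rightarrow> nat \<Rightarrow> nat \<Rightarrow> int" where
  "mdiff u v = (\<lambda>a c. int (u a c) - int (v a c))"

definition adj :: "nat \<Rightarrow> nat \<Rightarrow> (nat \<Rightarrow> nat \<Rightarrow> nat) \<Rightarrow> (nat \<Rightarrow> nat \<Rightarrow> nat) \<Rightarrow> bool" where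
  "adj n r u v \<longleftrightarrow> u \<in> verts n r \<and> v \<in> verts n r \<and> mdiff u v \<in> moves n"

definition deg :: "nat \<Rightarrow> nat \<Rightarrow> (nat \<Rightarrow> nat \<Rightarrow> nat) \<Rightarrow> nat" where
  "deg n r v = card {u. adj n r u v}"

definition min_deg :: "nat \<Rightarrow> nat \<Rightarrow> nat" where
  "min_deg n r = Min (deg n r ` verts n r)"

end

theory Submission
  imports Defs
begin

definition swp :: "(nat\<Rightarrow>nat\<Rightarrow>nat) \<Rightarrow> nat \<Rightarrow> nat \<Rightarrow> nat \<Rightarrow> nat \<Rightarrow> nat \<Rightarrow> nat \<Rightarrow> nat" where
  "swp v a b c d = (\<lambda>x y. nat (int (v x y) + basic_move a d c b x y))"

definition rws :: "(nat\<Rightarrow>nat\<Rightarrow>nat) \<Rightarrow> (nat\<Rightarrow>nat\<Rightarrow>nat) \<Rightarrow> nat set" where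
  "rws v u = {x. \<exists>y. u x y \<noteq> v x y}"

definition okq :: "nat \<Rightarrow> (nat\<Rightarrow>nat\<Rightarrow>nat) \<Rightarrow> nat \<Rightarrow> nat \<Rightarrow> nat \<Rightarrow> nat \<Rightarrow> bool" where
  "okq n v a b c d \<longleftrightarrow> a<n \<and> b<n \<and> c<n \<and> d<n \<and> a\<noteq>c \<and> b\<noteq>d \<and> 0<v a b \<and> 0<v c d"

lemma bm_val: "basic_move a d c b x y = (if x=a\<and>y=d then 1 else 0)+(if x=c\<and>y=b then 1 else 0)
   - (if x=a \<and> y=b then 1 else 0) - (if x=c\<and>y=d then 1 else 0)"
  by (simp add: basic_move_def emat_def)

lemma bm_nonneg: "okq n v a b c d \<Longrightarrow> 0 \<le> int (v x y) + basic_move a d c b x y"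
  unfolding okq_def bm_val by auto

lemma swp_int: "okq n v a b c d \<Longrightarrow> int (swp v a b c d x y) = int (v x y) + basic_move a d c b x y"
  using bm_nonneg[of n v a b c d x y] by (simp add: swp_def)

lemma sum_ind: "finite A \<Longrightarrow> (\<Sum>y\<in>A. if P \<and> y = d then (1::int) else 0) = (if P \<and> d \<in> A then 1 else 0)"
  by (cases P) auto
lemma sum_ind2: "finite A \<Longrightarrow> (\<Sum>y\<in>A. if y = d \<and> P then (1::int) else 0) = (if P \<and> d \<in> A then 1 else 0)"
  by (cases P) auto

lemma bm_rowsum: "b<n \<Longrightarrow> d<n \<Longrightarrow> (\<Sum>y<n. basic_move a d c b x y) = 0"
  unfolding bm_val by (simp add: sum.distrib sum_subtractf sum_ind)
lemma bm_colsum: "a<n \<Longrightarrow> c<n \<Longrightarrow> (\<Sum>x<n. basic_move a d c b x y) = 0"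
  unfolding bm_val by (simp add: sum.distrib sum_subtractf sum_ind2)

lemma swp_verts:
  assumes v: "v \<in> verts n r" and ok: "okq n v a b c d"
  shows "swp v a b c d \<in> verts n r"
proof -
  have lt: "a<n" "b<n" "c<n" "d<n" using ok by (auto simp: okq_def)
  have out: "(i \<ge> n \<or> j \<ge> n) \<Longrightarrow> swp v a b c d i j = 0" for i j
    using v lt by (auto simp: verts_def swp_def bm_val)
  have row: "(\<Sum>j<n. swp v a b c d i j) = r" if "i<n" for i
  proof -
    have "int (\<Sum>j<n. swp v a b c d i j) = (\<Sum>j<n. int (v i j) + basic_move a d c b i j)"
      by (simp add: swp_int[OF ok])
    also have "\<dots> = int (\<Sum>j<n. v i j)" using bm_rowsum[OF lt(2,4)] by (simp add: sum.distrib)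
    also have "\<dots> = int r" using v that by (simp add: verts_def)
    finally show ?thesis by (simp only: of_nat_eq_iff)
  qed
  have col: "(\<Sum>i<n. swp v a b c d i j) = r" if "j<n" for j
  proof -
    have "int (\<Sum>i<n. swp v a b c d i j) = (\<Sum>i<n. int (v i j) + basic_move a d c b i j)"
      by (simp add: swp_int[OF ok])
    also have "\<dots> = int (\<Sum>i<n. v i j)" using bm_colsum[OF lt(1,3)] by (simp add: sum.distrib)
    also have "\<dots> = int r" using v that by (simp add: verts_def)
    finally show ?thesis by (simp only: of_nat_eq_iff)
  qed
  show ?thesis using out row col by (simp add: verts_def)
qed

lemma bm_moves: assumes "a<n" "b<n" "c<n" "d<n" "a\<noteq>c" "b\<noteq>d" shows "basic_move a d c b \<in> moves n"
proof -
  consider "a<c" "d<b" | "a<c" "b<d" | "c<a" "d<b" | "c<a" "b<d" using assms by linarith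
  thus ?thesis
  proof cases
    case 1 thus ?thesis using assms unfolding moves_def by blast
  next
    case 2
    hence "basic_move a d c b = (\<lambda>x y. - basic_move a b c d x y)" by (auto simp: bm_val fun_eq_iff)
    thus ?thesis using 2 assms unfolding moves_def by blast
  next
    case 3
    hence "basic_move a d c b = (\<lambda>x y. - basic_move c d a b x y)" by (auto simp: bm_val fun_eq_iff)
    thus ?thesis using 3 assms unfolding moves_def by blast
  next
    case 4
    hence "basic_move a d c b = basic_move c b a d" by (auto simp: bm_val fun_eq_iff)
    thus ?thesis using 4 assms unfolding moves_def by blast
  qed
qed

lemma adj_swp: "v \<in> verts n r \<Longrightarrow> okq n v a b c d \<Longrightarrow> adj n r (swp v a b c d) v"
proof -
  assume v: "v \<in> verts n r" and ok: "okq n v a b c d"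
  have "mdiff (swp v a b c d) v = basic_move a d c b"
    by (simp add: mdiff_def fun_eq_iff swp_int[OF ok])
  thus ?thesis using v swp_verts[OF v ok] bm_moves ok by (simp add: adj_def okq_def)
qed


lemma adj_conv:
  assumes "adj n r u v"
  shows "\<exists>a b c d. okq n v a b c d \<and> u = swp v a b c d"
proof -
  from assms have m: "mdiff u v \<in> moves n" by (simp add: adj_def)
  then obtain i k j l where ik: "i<k" "k<n" "j<l" "l<n" and
    dis: "mdiff u v = basic_move i j k l \<or> mdiff u v = (\<lambda>a c. - basic_move i j k l a c)"
    unfolding moves_def by blast
  have ue: "int (u x y) = int (v x y) + mdiff u v x y" for x y by (simp add: mdiff_def)
  from dis show ?thesis
  proof
    assume h: "mdiff u v = basic_move i j k l"
    have "int (u i l) = int (v i l) - 1" "int (u k j) = int (v k j) - 1"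
      using ue[of i l] ue[of k j] ik unfolding h by (auto simp: basic_move_def emat_def)
    hence ok: "okq n v i l k j" using ik unfolding okq_def by auto
    have "u = swp v i l k j"
    proof (rule ext, rule ext)
      fix x y
      have "u x y = nat (int (u x y))" by simp
      also have "\<dots> = nat (int (v x y) + basic_move i j k l x y)" using ue[of x y] h by simp
      finally show "u x y = swp v i l k j x y" by (simp add: swp_def)
    qed
    thus ?thesis using ok by blast
  next
    assume h: "mdiff u v = (\<lambda>a c. - basic_move i j k l a c)"
    have "int (u i j) = int (v i j) - 1" "int (u k l) = int (v k l) - 1"
      using ue[of i j] ue[of k l] ik unfolding h by (auto simp: basic_move_def emat_def)
    hence ok: "okq n v i j k l" using ik unfolding okq_def by auto
    have e: "- basic_move i j k l x y = basic_move i l k j x y" for x y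
      by (auto simp: bm_val)
    have "u = swp v i j k l"
    proof (rule ext, rule ext)
      fix x y
      have "u x y = nat (int (u x y))" by simp
      also have "\<dots> = nat (int (v x y) + basic_move i l k j x y)" using ue[of x y] h e[of x y] by simp
      finally show "u x y = swp v i j k l x y" by (simp add: swp_def)
    qed
    thus ?thesis using ok by blast
  qed
qed

lemma rws_swp: "okq n v a b c d \<Longrightarrow> rws v (swp v a b c d) = {a,c}"
proof -
  assume ok: "okq n v a b c d"
  have ne: "swp v a b c d x y \<noteq> v x y \<longleftrightarrow> basic_move a d c b x y \<noteq> 0" for x y
    using swp_int[OF ok, of x y] by linarith
  show ?thesis
  proof (rule set_eqI, rule iffI)
    fix x assume "x \<in> rws v (swp v a b c d)"
    then obtain y where "basic_move a d c b x y \<noteq> 0" using ne unfolding rws_def by blast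
    thus "x \<in> {a,c}" by (cases "x = a \<or> x = c") (auto simp: bm_val)
  next
    fix x assume "x \<in> {a,c}"
    hence "basic_move a d c b x (if x = a then b else d) \<noteq> 0" using ok
      by (cases "x = a") (simp_all add: bm_val okq_def)
    thus "x \<in> rws v (swp v a b c d)" using ne unfolding rws_def by blast
  qed
qed

lemma swp_sym: "swp v a b c d = swp v c d a b"
  by (auto simp: swp_def fun_eq_iff bm_val)

lemma okq_sym: "okq n v a b c d = okq n v c d a b"
  by (auto simp: okq_def)

lemma swp_inj:
  assumes ok1: "okq n v a b c d" and ok2: "okq n v a b' c d'" and e: "swp v a b c d = swp v a b' c d'"
  shows "b = b' \<and> d = d'"
proof -
  have "basic_move a d c b x y = basic_move a d' c b' x y" for x y
    using swp_int[OF ok1, of x y] swp_int[OF ok2, of x y] e by simp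
  note eqs = this[of a b] this[of c d]
  have 1: "basic_move a d c b a b = -1" "basic_move a d c b c d = -1" using ok1 by (simp_all add: bm_val okq_def)
  have 2: "basic_move a d' c b' a b = (if b = d' then 1 else 0) - (if b = b' then 1 else 0)"
    "basic_move a d' c b' c d = (if d = b' then 1 else 0) - (if d = d' then 1 else 0)"
    using ok2 by (simp_all add: bm_val okq_def)
  have "b = b'" using eqs(1) 1(1) 2(1) by (simp split: if_splits)
  moreover have "d = d'" using eqs(2) 1(2) 2(2) by (simp split: if_splits)
  ultimately show ?thesis by simp
qed

lemma nbr_fin: "v \<in> verts n r \<Longrightarrow> finite {u. adj n r u v}"
proof -
  have "{u. adj n r u v} \<subseteq> (\<lambda>(a,b,c,d). swp v a b c d) ` ({..<n}\<times>{..<n}\<times>{..<n}\<times>{..<n})"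
  proof
    fix u assume "u \<in> {u. adj n r u v}"
    then obtain a b c d where "okq n v a b c d" "u = swp v a b c d" using adj_conv by blast
    thus "u \<in> (\<lambda>(a,b,c,d). swp v a b c d) ` ({..<n}\<times>{..<n}\<times>{..<n}\<times>{..<n})"
      unfolding okq_def by force
  qed
  thus ?thesis by (rule finite_subset) auto
qed


lemma two_le: "finite A \<Longrightarrow> x \<in> A \<Longrightarrow> y \<in> A \<Longrightarrow> x \<noteq> y \<Longrightarrow> f x + f y \<le> (\<Sum>z\<in>A. (f z::nat))"
proof -
  assume "finite A" "x \<in> A" "y \<in> A" "x \<noteq> y"
  hence "(\<Sum>z\<in>{x,y}. f z) \<le> (\<Sum>z\<in>A. f z)" by (intro sum_mono2) auto
  thus ?thesis using \<open>x\<noteq>y\<close> by simp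
qed

lemma row_two: "w \<in> verts n r \<Longrightarrow> i<n \<Longrightarrow> b<n \<Longrightarrow> b'<n \<Longrightarrow> b\<noteq>b' \<Longrightarrow> w i b + w i b' \<le> r"
  using two_le[of "{..<n}" b b' "w i"] by (simp add: verts_def)

lemma col_two: "w \<in> verts n r \<Longrightarrow> j<n \<Longrightarrow> i<n \<Longrightarrow> k<n \<Longrightarrow> i\<noteq>k \<Longrightarrow> w i j + w k j \<le> r"
  using two_le[of "{..<n}" i k "\<lambda>x. w x j"] by (simp add: verts_def)

lemma pos_row: "w \<in> verts n r \<Longrightarrow> r\<ge>1 \<Longrightarrow> i<n \<Longrightarrow> \<exists>b<n. 0 < w i b"
proof (rule ccontr)
  assume "w \<in> verts n r" "r\<ge>1" "i<n" "\<not> (\<exists>b<n. 0 < w i b)"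
  hence "(\<Sum>j<n. w i j) = 0" by simp
  moreover have "(\<Sum>j<n. w i j) = r" using \<open>w \<in> verts n r\<close> \<open>i<n\<close> by (simp add: verts_def)
  ultimately show False using \<open>r\<ge>1\<close> by linarith
qed

lemma single_row: "w \<in> verts n r \<Longrightarrow> i<n \<Longrightarrow> b<n \<Longrightarrow> (\<forall>y<n. y\<noteq>b \<longrightarrow> w i y = 0) \<Longrightarrow> w i b = r"
proof -
  assume a: "w \<in> verts n r" "i<n" "b<n" "\<forall>y<n. y\<noteq>b \<longrightarrow> w i y = 0"
  have "(\<Sum>j<n. w i j) = w i b"
    using a(3,4) by (subst sum.remove[of _ b]) auto
  thus ?thesis using a by (simp add: verts_def)
qed

lemma L1:
  assumes w: "w \<in> verts n r" and r: "r\<ge>1" and "i<n" "k<n" "i\<noteq>k"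
  shows "\<exists>b d. okq n w i b k d"
proof -
  obtain b where b: "b<n" "0<w i b" using pos_row[OF w r \<open>i<n\<close>] by blast
  obtain d where d: "d<n" "0<w k d" using pos_row[OF w r \<open>k<n\<close>] by blast
  show ?thesis
  proof (cases "b = d")
    case False thus ?thesis using b d assms unfolding okq_def by blast
  next
    case True
    show ?thesis
    proof (cases "\<exists>b'<n. b'\<noteq>b \<and> 0 < w i b'")
      case True
      then obtain b' where "b'<n" "b'\<noteq>b" "0<w i b'" by blast
      thus ?thesis using d \<open>b = d\<close> assms unfolding okq_def by blast
    next
      case False
      hence "w i b = r" using single_row[OF w \<open>i<n\<close> b(1)] by auto
      moreover have "w i b + w k b \<le> r" using col_two[OF w b(1) \<open>i<n\<close> \<open>k<n\<close> \<open>i\<noteq>k\<close>] .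
      ultimately show ?thesis using d \<open>b=d\<close> by simp
    qed
  qed
qed

lemma L2:
  assumes w: "w \<in> verts n r" and r: "r\<ge>1" and "i<n" "k<n" "i\<noteq>k"
    and b12: "b1<n" "b2<n" "b1\<noteq>b2" "0<w i b1" "0<w i b2"
  shows "\<exists>b d b' d'. okq n w i b k d \<and> okq n w i b' k d' \<and> (b \<noteq> b' \<or> d \<noteq> d')"
proof -
  obtain d where d: "d<n" "0<w k d" using pos_row[OF w r \<open>k<n\<close>] by blast
  have other: "\<exists>l<n. l \<noteq> c \<and> 0 < w k l" if "c<n" "0<w i c" "c = d" for c
  proof (rule ccontr)
    assume "\<not> ?thesis"
    hence "w k c = r" using single_row[OF w \<open>k<n\<close> that(1)] by auto
    moreover have "w i c + w k c \<le> r" using col_two[OF w that(1) \<open>i<n\<close> \<open>k<n\<close> \<open>i\<noteq>k\<close>] .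
    ultimately show False using that by simp
  qed
  consider "d \<noteq> b1" "d \<noteq> b2" | "d = b1" | "d = b2" by blast
  thus ?thesis
  proof cases
    case 1 thus ?thesis using d b12 assms unfolding okq_def by blast
  next
    case 2
    then obtain l where l: "l<n" "l\<noteq>b1" "0<w k l" using other[of b1] b12 by blast
    show ?thesis
    proof (cases "l = b2")
      case True
      hence "okq n w i b2 k b1 \<and> okq n w i b1 k b2" using l d 2 b12 assms unfolding okq_def by auto
      thus ?thesis using b12 by blast
    next
      case False
      hence "okq n w i b2 k b1 \<and> okq n w i b1 k l" using l d 2 b12 assms unfolding okq_def by auto
      thus ?thesis using b12 by blast
    qed
  next
    case 3
    then obtain l where l: "l<n" "l\<noteq>b2" "0<w k l" using other[of b2] b12 by blast
    show ?thesis
    proof (cases "l = b1")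
      case True
      hence "okq n w i b2 k b1 \<and> okq n w i b1 k b2" using l d 3 b12 assms unfolding okq_def by auto
      thus ?thesis using b12 by blast
    next
      case False
      hence "okq n w i b1 k b2 \<and> okq n w i b2 k l" using l d 3 b12 assms unfolding okq_def by auto
      thus ?thesis using b12 by blast
    qed
  qed
qed


definition P2 :: "nat \<Rightarrow> nat set set" where "P2 n = {B. B \<subseteq> {..<n} \<and> card B = 2}"

lemma card_P2: "card (P2 n) = n choose 2"
  unfolding P2_def using n_subsets[of "{..<n}" 2] by simp

lemma fin_P2: "finite (P2 n)"
  unfolding P2_def by (rule finite_subset[of _ "Pow {..<n}"]) auto

lemma nbr_rows: "v \<in> verts n r \<Longrightarrow> okq n v a b c d \<Longrightarrow> swp v a b c d \<in> {u. adj n r u v} \<and> rws v (swp v a b c d) = {a,c}"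
  using adj_swp rws_swp by blast

lemma choose_f:
  assumes w: "w \<in> verts n r" and r: "r\<ge>1"
  shows "\<exists>f. \<forall>B\<in>P2 n. f B \<in> {u. adj n r u w} \<and> rws w (f B) = B"
proof -
  have "\<forall>B\<in>P2 n. \<exists>u. u \<in> {u. adj n r u w} \<and> rws w u = B"
  proof
    fix B assume "B \<in> P2 n"
    then obtain i k where B: "B = {i,k}" "i\<noteq>k" "i<n" "k<n" unfolding P2_def card_2_iff by auto
    then obtain b d where "okq n w i b k d" using L1[OF w r] by blast
    thus "\<exists>u. u \<in> {u. adj n r u w} \<and> rws w u = B" using nbr_rows[OF w] B by blast
  qed
  thus ?thesis by (rule bchoice)
qed

lemma LB:
  assumes w: "w \<in> verts n r" and r: "r\<ge>1"
  shows "n choose 2 \<le> deg n r w"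
proof -
  obtain f where f: "\<forall>B\<in>P2 n. f B \<in> {u. adj n r u w} \<and> rws w (f B) = B" using choose_f[OF w r] by blast
  have "inj_on f (P2 n)" by (rule inj_onI) (metis f)
  moreover have "f ` P2 n \<subseteq> {u. adj n r u w}" using f by blast
  ultimately have "card (P2 n) \<le> card {u. adj n r u w}"
    using card_inj_on_le nbr_fin[OF w] by blast
  thus ?thesis by (simp add: card_P2 deg_def)
qed

lemma LB2:
  assumes w: "w \<in> verts n r" and r: "r\<ge>1" and i: "i<n"
    and b12: "b1<n" "b2<n" "b1\<noteq>b2" "0<w i b1" "0<w i b2"
  shows "(n choose 2) + (n - 1) \<le> deg n r w"
proof -
  obtain f where f: "\<forall>B\<in>P2 n. f B \<in> {u. adj n r u w} \<and> rws w (f B) = B" using choose_f[OF w r] by blast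
  define Q where "Q = {..<n} - {i}"
  have "\<forall>k\<in>Q. \<exists>u. u \<in> {u. adj n r u w} \<and> rws w u = {i,k} \<and> u \<noteq> f {i,k}"
  proof
    fix k assume "k \<in> Q"
    hence k: "k<n" "i\<noteq>k" unfolding Q_def by auto
    obtain b d b' d' where o: "okq n w i b k d" "okq n w i b' k d'" "b \<noteq> b' \<or> d \<noteq> d'"
      using L2[OF w r i k b12] by blast
    have "swp w i b k d \<noteq> swp w i b' k d'" using swp_inj[OF o(1,2)] o(3) by blast
    thus "\<exists>u. u \<in> {u. adj n r u w} \<and> rws w u = {i,k} \<and> u \<noteq> f {i,k}"
      using nbr_rows[OF w o(1)] nbr_rows[OF w o(2)] by metis
  qed
  then obtain g where g: "\<forall>k\<in>Q. g k \<in> {u. adj n r u w} \<and> rws w (g k) = {i,k} \<and> g k \<noteq> f {i,k}"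
    by (metis bchoice)
  have injf: "inj_on f (P2 n)" by (rule inj_onI) (metis f)
  have injg: "inj_on g Q"
  proof (rule inj_onI)
    fix x y assume "x\<in>Q" "y\<in>Q" "g x = g y"
    hence "{i,x} = {i,y}" using g by metis
    thus "x = y" using \<open>x\<in>Q\<close> \<open>y\<in>Q\<close> unfolding Q_def by (auto simp: doubleton_eq_iff)
  qed
  have disj: "f ` P2 n \<inter> g ` Q = {}"
  proof (rule ccontr)
    assume "f ` P2 n \<inter> g ` Q \<noteq> {}"
    then obtain B k where Bk: "B \<in> P2 n" "k\<in>Q" "f B = g k" by blast
    hence "B = {i,k}" using f g by metis
    thus False using Bk g by metis
  qed
  have fin: "finite Q" unfolding Q_def by simp
  have "card (f ` P2 n \<union> g ` Q) = card (P2 n) + card Q"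
    using card_Un_disjoint[OF finite_imageI[OF fin_P2] finite_imageI[OF fin] disj]
      card_image[OF injf] card_image[OF injg] by simp
  moreover have "f ` P2 n \<union> g ` Q \<subseteq> {u. adj n r u w}" using f g by blast
  ultimately have "card (P2 n) + card Q \<le> card {u. adj n r u w}"
    by (metis card_mono nbr_fin[OF w])
  moreover have "card Q = n - 1" unfolding Q_def using i by simp
  ultimately show ?thesis by (simp add: card_P2 deg_def)
qed

lemma UB:
  assumes v: "v \<in> verts n r" and r: "r\<ge>1" and perm: "\<forall>i j. v i j > 0 \<longrightarrow> v i j = r"
  shows "deg n r v \<le> n choose 2"
proof -
  have uniq: "b = b'" if "a<n" "b<n" "b'<n" "0<v a b" "0<v a b'" for a b b'
  proof (rule ccontr)
    assume "b\<noteq>b'"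
    hence "v a b + v a b' \<le> r" using row_two[OF v that(1-3)] by simp
    thus False using perm that r by force
  qed
  have key: "u = u'" if "okq n v a b c d" "okq n v a b' c d'" "u = swp v a b c d" "u' = swp v a b' c d'"
    for u u' a b c d b' d'
    using that uniq unfolding okq_def by metis
  have "inj_on (rws v) {u. adj n r u v}"
  proof (rule inj_onI)
    fix u u' assume uu: "u \<in> {u. adj n r u v}" "u' \<in> {u. adj n r u v}" and e: "rws v u = rws v u'"
    obtain a b c d where o1: "okq n v a b c d" "u = swp v a b c d" using adj_conv uu(1) by blast
    obtain a' b' c' d' where o2: "okq n v a' b' c' d'" "u' = swp v a' b' c' d'" using adj_conv uu(2) by blast
    note o = o1 o2
    have "{a,c} = {a',c'}" using e o rws_swp by metis
    hence "(a = a' \<and> c = c') \<or> (a = c' \<and> c = a')" by (auto simp: doubleton_eq_iff)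
    thus "u = u'"
    proof
      assume "a = a' \<and> c = c'" thus ?thesis using key o by blast
    next
      assume h: "a = c' \<and> c = a'"
      have "okq n v a d' c b'" "u' = swp v a d' c b'" using o(3,4) h okq_sym swp_sym by metis+
      thus ?thesis using key o by blast
    qed
  qed
  moreover have "rws v ` {u. adj n r u v} \<subseteq> P2 n"
  proof
    fix B assume "B \<in> rws v ` {u. adj n r u v}"
    then obtain u where "adj n r u v" "B = rws v u" by blast
    then obtain a b c d where "okq n v a b c d" "B = {a,c}" using adj_conv rws_swp by metis
    thus "B \<in> P2 n" unfolding P2_def okq_def by auto
  qed
  ultimately have "card {u. adj n r u v} \<le> card (P2 n)"
    using card_inj_on_le fin_P2 by blast
  thus ?thesis by (simp add: card_P2 deg_def)
qed

lemma fin_verts: "finite (verts n r)"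
proof -
  define F1 where "F1 = {g::nat\<Rightarrow>nat. \<forall>x. (x \<in> {..<n} \<longrightarrow> g x \<in> {..r}) \<and> (x \<notin> {..<n} \<longrightarrow> g x = 0)}"
  have f1: "finite F1" unfolding F1_def by (rule finite_set_of_finite_funs) auto
  have "finite {f::nat\<Rightarrow>nat\<Rightarrow>nat. \<forall>x. (x \<in> {..<n} \<longrightarrow> f x \<in> F1) \<and> (x \<notin> {..<n} \<longrightarrow> f x = (\<lambda>_. 0))}"
    by (rule finite_set_of_finite_funs) (auto simp: f1)
  moreover have "verts n r \<subseteq> {f::nat\<Rightarrow>nat\<Rightarrow>nat. \<forall>x. (x \<in> {..<n} \<longrightarrow> f x \<in> F1) \<and> (x \<notin> {..<n} \<longrightarrow> f x = (\<lambda>_. 0))}"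
  proof
    fix f assume f: "f \<in> verts n r"
    have le: "f x y \<le> r" if "x<n" "y<n" for x y
    proof -
      have "f x y \<le> (\<Sum>j<n. f x j)" using that by (intro member_le_sum) auto
      thus ?thesis using f that by (simp add: verts_def)
    qed
    show "f \<in> {f::nat\<Rightarrow>nat\<Rightarrow>nat. \<forall>x. (x \<in> {..<n} \<longrightarrow> f x \<in> F1) \<and> (x \<notin> {..<n} \<longrightarrow> f x = (\<lambda>_. 0))}"
      using f le unfolding F1_def verts_def by (auto simp: fun_eq_iff)
  qed
  ultimately show ?thesis by (rule finite_subset[rotated])
qed

theorem lemma2p1:
  fixes n r :: nat and v :: "nat \<Rightarrow> nat \<Rightarrow> nat"
  assumes "n \<ge> 1" and "r \<ge> 1" and "v \<in> verts n r"
  shows "((\<forall>i j. v i j > 0 \<longrightarrow> v i j = r) \<longrightarrow>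
            deg n r v = min_deg n r \<and> min_deg n r = n choose 2)
       \<and> (\<not> (\<forall>i j. v i j > 0 \<longrightarrow> v i j = r) \<longrightarrow>
            (n + 2) * (n - 1) \<le> 2 * deg n r v \<and> (n choose 2) + (n - 1) \<le> deg n r v)"
proof (intro conjI impI)
  assume perm: "\<forall>i j. v i j > 0 \<longrightarrow> v i j = r"
  have dv: "deg n r v = n choose 2" using UB[OF assms(3,2) perm] LB[OF assms(3,2)] by simp
  have md: "min_deg n r = n choose 2" unfolding min_deg_def
  proof (rule Min_eqI)
    show "finite (deg n r ` verts n r)" using fin_verts by simp
    show "n choose 2 \<le> y" if "y \<in> deg n r ` verts n r" for y using that LB assms(2) by auto
    show "n choose 2 \<in> deg n r ` verts n r" using dv assms(3) by force
  qed
  show "deg n r v = min_deg n r" using dv md by simp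
  show "min_deg n r = n choose 2" by (rule md)
next
  assume np: "\<not> (\<forall>i j. v i j > 0 \<longrightarrow> v i j = r)"
  then obtain i j where ij: "0 < v i j" "v i j \<noteq> r" by blast
  have v: "v \<in> verts n r" by (rule assms(3))
  have "i<n"
  proof (rule ccontr)
    assume "\<not> i<n" hence "v i j = 0" using v by (simp add: verts_def)
    thus False using ij by simp
  qed
  have "j<n"
  proof (rule ccontr)
    assume "\<not> j<n" hence "v i j = 0" using v by (simp add: verts_def)
    thus False using ij by simp
  qed
  have "\<exists>j'<n. j' \<noteq> j \<and> 0 < v i j'"
  proof (rule ccontr)
    assume "\<not> ?thesis"
    hence "v i j = r" using single_row[OF v \<open>i<n\<close> \<open>j<n\<close>] by auto
    thus False using ij by simp
  qed
  then obtain j' where "j'<n" "j'\<noteq>j" "0 < v i j'" by blast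
  hence lb: "(n choose 2) + (n - 1) \<le> deg n r v"
    using LB2[OF v assms(2) \<open>i<n\<close> \<open>j<n\<close> \<open>j'<n\<close>] ij by auto
  show "(n choose 2) + (n - 1) \<le> deg n r v" by (rule lb)
  have "2 * (n choose 2) = n * (n - 1)"
  proof -
    have "even (n * (n - 1))" by (cases "even n") auto
    thus ?thesis by (simp add: choose_two)
  qed
  hence "(n + 2) * (n - 1) = 2 * ((n choose 2) + (n - 1))" by (simp add: add_mult_distrib add_mult_distrib2)
  thus "(n + 2) * (n - 1) \<le> 2 * deg n r v" using lb by simp
qed

end
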